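(* Let $T=(V,E)$ be a finite tree, $\delta\in(0,1)$, and let $\mathcal H=\{\{i,j\}:\{i,j\}\in E\}$. Then for every $i\in V$, $$\mu_i(V;r^{v^T}_{\mathcal H})=\sum_{\substack{\{p,q\}\subseteq V,\ p\neq q\\ i\text{ lies on the }T\text{-path from }p\text{ to }q}}\frac{2\,\delta^{t_{pq}(T)}}{t_{pq}(T)+1},$$ where $t_{pq}(T)$ is the distance between $p$ and $q$ in $T$ (and the endpoints $p,q$ count as lying on the path).
   Context: For a finite simple undirected graph $G=(V,E)$ and $\delta\in(0,1)$: for $S\subseteq V$, $G[S]$ is the induced subgraph and $t_{ij}(G[S])$ the shortest-path distance in $G[S]$ ($=\infty$ if $i,j$ are disconnected there), with $\delta^\infty:=0$. The distance-polynomial worth is $v^G(S):=\sum_{i\in S}\sum_{j\in S,\,j\neq i}\delta^{t_{ij}(G[S])}$. A conference structure is a family $\mathcal H$ of subsets of $V$ of size $\ge2$; for $C\subseteq V$, $C/\mathcal H$ is the partition of $C$ into classes of the relation "$i=j$, or there are $S_1,\dots,S_m\in\mathcal H$ all contained in $C$ with $i\in S_1$, $j\in S_m$, $S_k\cap S_{k+1}\neq\varnothing$". The restricted worth is $r^{v^G}_{\mathcal H}(C):=\sum_{B\in C/\mathcal H}v^G(B)$. For a TU game $u$ on a finite player set $N$, $\mu_i(N;u):=\sum_{S\subseteq N\setminus\{i\}}\frac{|S|!(|N|-|S|-1)!}{|N|!}\bigl(u(S\cup\{i\})-u(S)\bigr)$ (the Shapley value; applied to $r^{v^G}_{\mathcal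 H}$ it is the Myerson value). *)

theory Defs
  imports Main "HOL-Library.Extended_Nat"
begin

definition simple_graph :: "'a set \<Rightarrow> 'a set set \<Rightarrow> bool" where
  "simple_graph V E \<longleftrightarrow> finite V \<and>
     (\<forall>e\<in>E. \<exists>i j. e = {i, j} \<and> i \<noteq> j \<and> i \<in> V \<and> j \<in> V)"

definition walk_in :: "'a set set \<Rightarrow> 'a set \<Rightarrow> 'a list \<Rightarrow> bool" where
  "walk_in E S ps \<longleftrightarrow> ps \<noteq> [] \<and> set ps \<subseteq> S \<and>
     (\<forall>k. Suc k < length ps \<longrightarrow> {ps ! k, ps ! Suc k} \<in> E)"

text \<open>Shortest-path distance t_ij(G[S]) (infinity if disconnected).\<close>

definition gdist :: "'a set set \<Rightarrow> 'a set \<Rightarrow> 'a \<Rightarrow> 'a \<Rightarrow> enat" where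
  "gdist E S i j = (INF ps \<in> {ps. walk_in E S ps \<and> hd ps = i \<and> last ps = j}.
                      enat (length ps - 1))"

definition dpow :: "real \<Rightarrow> enat \<Rightarrow> real" where
  "dpow \<delta> t = (case t of enat n \<Rightarrow> \<delta> ^ n | \<infinity> \<Rightarrow> 0)"

definition dp_worth :: "real \<Rightarrow> 'a set set \<Rightarrow> 'a set \<Rightarrow> real" where
  "dp_worth \<delta> E S = (\<Sum>i\<in>S. \<Sum>j\<in>S - {i}. dpow \<delta> (gdist E S i j))"

definition connected_graph :: "'a set \<Rightarrow> 'a set set \<Rightarrow> bool" where
  "connected_graph V E \<longleftrightarrow>
     (\<forall>i\<in>V. \<forall>j\<in>V. \<exists>ps. walk_in E V ps \<and> hd ps = i \<and> last ps = j)"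

definition acyclic_graph :: "'a set \<Rightarrow> 'a set set \<Rightarrow> bool" where
  "acyclic_graph V E \<longleftrightarrow>
     \<not> (\<exists>ps. walk_in E V ps \<and> distinct ps \<and> length ps \<ge> 3 \<and> {last ps, hd ps} \<in> E)"

definition is_tree :: "'a set \<Rightarrow> 'a set set \<Rightarrow> bool" where
  "is_tree V E \<longleftrightarrow> simple_graph V E \<and> V \<noteq> {} \<and> connected_graph V E \<and> acyclic_graph V E"

definition on_path :: "'a set \<Rightarrow> 'a set set \<Rightarrow> 'a \<Rightarrow> 'a \<Rightarrow> 'a \<Rightarrow> bool" where
  "on_path V E p q i \<longleftrightarrow>
     (\<exists>ps. walk_in E V ps \<and> distinct ps \<and> hd ps = p \<and> last ps = q \<and> i \<in> set ps)"

definition conf_rel :: "'a set set \<Rightarrow> 'a set \<Rightarrow> 'a \<Rightarrow> 'a \<Rightarrow> bool" where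
  "conf_rel H C i j \<longleftrightarrow> i = j \<or>
     (\<exists>Ss. Ss \<noteq> [] \<and> (\<forall>S\<in>set Ss. S \<in> H \<and> S \<subseteq> C) \<and> i \<in> hd Ss \<and> j \<in> last Ss \<and>
           (\<forall>k. Suc k < length Ss \<longrightarrow> Ss ! k \<inter> Ss ! Suc k \<noteq> {}))"

definition conf_partition :: "'a set set \<Rightarrow> 'a set \<Rightarrow> 'a set set" where
  "conf_partition H C = (\<lambda>i. {j\<in>C. conf_rel H C i j}) ` C"

definition restricted_worth :: "('a set \<Rightarrow> real) \<Rightarrow> 'a set set \<Rightarrow> 'a set \<Rightarrow> real" where
  "restricted_worth v H C = (\<Sum>B\<in>conf_partition H C. v B)"

definition shapley :: "'a \<Rightarrow> 'a set \<Rightarrow> ('a set \<Rightarrow> real) \<Rightarrow> real" where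
  "shapley i N u = (\<Sum>S\<in>Pow (N - {i}).
      (fact (card S) * fact (card N - card S - 1) / fact (card N)) * (u (S \<union> {i}) - u S))"

definition fst_end :: "'a set \<Rightarrow> 'a" where
  "fst_end e = (SOME p. p \<in> e)"

definition snd_end :: "'a set \<Rightarrow> 'a" where
  "snd_end e = (SOME q. q \<in> e \<and> q \<noteq> fst_end e)"

end

theory Submission
  imports Defs
begin

lemma walk_in_succ:
  "walk_in E S ps \<longleftrightarrow> ps \<noteq> [] \<and> set ps \<subseteq> S \<and> successively (\<lambda>x y. {x,y} \<in> E) ps"
  unfolding walk_in_def successively_conv_nth by blast

lemma succ_edge_sym:
  "successively (\<lambda>x y. {y,x} \<in> E) ps = successively (\<lambda>x y. {x,y} \<in> E) ps"
  by (simp add: insert_commute)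

lemma walk_rev: "walk_in E S ps \<Longrightarrow> walk_in E S (rev ps)"
  by (simp add: walk_in_succ succ_edge_sym)

lemma walk_shortcut:
  "walk_in E S ps \<Longrightarrow> \<exists>qs. walk_in E S qs \<and> distinct qs \<and> hd qs = hd ps \<and> last qs = last ps
      \<and> set qs \<subseteq> set ps"
proof (induction "length ps" arbitrary: ps rule: less_induct)
  case less
  show ?case
  proof (cases "distinct ps")
    case True then show ?thesis using less.prems by blast
  next
    case False
    then obtain xs a ys zs where ps: "ps = xs @ a # ys @ a # zs"
      using not_distinct_decomp[of ps] by auto
    let ?qs = "xs @ a # zs"
    have w: "walk_in E S ?qs" using less.prems unfolding ps walk_in_succ
      by (auto simp: successively_append_iff successively_Cons split: if_splits)
    have h: "hd ?qs = hd ps" "last ?qs = last ps" "set ?qs \<subseteq> set ps"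
      by (auto simp: ps hd_append)
    have "length ?qs < length ps" by (simp add: ps)
    from less.hyps[OF this w] h show ?thesis by auto
  qed
qed

lemma distinct_hd_last:
  "distinct xs \<Longrightarrow> xs \<noteq> [] \<Longrightarrow> hd xs = last xs \<Longrightarrow> xs = [hd xs]"
  by (cases xs) (auto split: if_splits)

lemma list_two_ends:
  assumes "xs \<noteq> []" "hd xs \<noteq> last xs"
  shows "xs = hd xs # butlast (tl xs) @ [last xs]"
proof -
  obtain x ys where xs: "xs = x # ys" using assms by (cases xs) auto
  with assms have "ys \<noteq> []" by auto
  then show ?thesis using xs by simp
qed

lemma simple_path_unique:
  assumes acyc: "acyclic_graph V E"
  shows "walk_in E V ps \<Longrightarrow> walk_in E V qs \<Longrightarrow> distinct ps \<Longrightarrow> distinct qs \<Longrightarrow>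
         hd ps = hd qs \<Longrightarrow> last ps = last qs \<Longrightarrow> ps = qs"
proof (induction "length ps + length qs" arbitrary: ps qs rule: less_induct)
  case less
  define p where "p = hd ps"
  define q where "q = last ps"
  have ne: "ps \<noteq> []" "qs \<noteq> []" using less.prems by (auto simp: walk_in_def)
  show ?case
  proof (cases "p = q")
    case True
    then have "ps = [p]" "qs = [p]"
      using distinct_hd_last[of ps] distinct_hd_last[of qs] less.prems ne
      by (auto simp: p_def q_def)
    then show ?thesis by simp
  next
    case pq: False
    show ?thesis
    proof (cases "\<exists>x \<in> set ps \<inter> set qs. x \<noteq> p \<and> x \<noteq> q")
      case True
      then obtain x where x: "x \<in> set ps" "x \<in> set qs" "x \<noteq> p" "x \<noteq> q" by blast
      obtain pa pb where ps: "ps = pa @ x # pb" using split_list[OF x(1)] by blast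
      obtain qa qb where qs: "qs = qa @ x # qb" using split_list[OF x(2)] by blast
      have "pa \<noteq> []" "pb \<noteq> []" using x ps unfolding p_def q_def by auto
      have "qa \<noteq> []" "qb \<noteq> []" using x qs less.prems unfolding p_def q_def by auto
      have w1: "walk_in E V (pa @ [x])" "walk_in E V (x # pb)"
        using less.prems(1) unfolding ps walk_in_succ
        by (auto simp: successively_append_iff)
      have w2: "walk_in E V (qa @ [x])" "walk_in E V (x # qb)"
        using less.prems(2) unfolding qs walk_in_succ
        by (auto simp: successively_append_iff)
      have e1: "pa @ [x] = qa @ [x]"
        apply (rule less.hyps[OF _ w1(1) w2(1)])
        using less.prems \<open>pa \<noteq> []\<close> \<open>qa \<noteq> []\<close> \<open>pb \<noteq> []\<close> \<open>qb \<noteq> []\<close> unfolding ps qs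
        by auto
      have e2: "x # pb = x # qb"
        apply (rule less.hyps[OF _ w1(2) w2(2)])
        using less.prems \<open>pa \<noteq> []\<close> \<open>qa \<noteq> []\<close> \<open>pb \<noteq> []\<close> \<open>qb \<noteq> []\<close> unfolding ps qs
        by auto
      show ?thesis using e1 e2 ps qs by simp
    next
      case False
      then have disj: "\<And>x. x \<in> set ps \<Longrightarrow> x \<in> set qs \<Longrightarrow> x = p \<or> x = q" by blast
      show ?thesis
      proof (rule ccontr)
        assume neq: "ps \<noteq> qs"
        define qi where "qi = butlast (tl qs)"
        have qs: "qs = p # qi @ [q]"
          using list_two_ends[of qs] ne less.prems pq unfolding qi_def p_def q_def by auto
        define cyc where "cyc = ps @ rev qi"
        have sq: "successively (\<lambda>x y. {x,y} \<in> E) (p # qi @ [q])"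
          using less.prems(2) qs by (simp add: walk_in_succ)
        have sq2: "successively (\<lambda>x y. {x,y} \<in> E) (qi @ [q])"
          using sq by (cases "qi @ [q]") auto
        have sqi: "successively (\<lambda>x y. {x,y} \<in> E) qi"
          using sq2 by (simp add: successively_append_iff)
        have lastq: "qi \<noteq> [] \<Longrightarrow> {q, last qi} \<in> E"
          using sq2 by (simp add: successively_append_iff insert_commute)
        have hdq: "qi \<noteq> [] \<Longrightarrow> {p, hd qi} \<in> E" using sq by (cases qi) auto
        have pqE: "qi = [] \<Longrightarrow> {p, q} \<in> E" using sq by simp
        have sps: "successively (\<lambda>x y. {x,y} \<in> E) ps" using less.prems(1) by (simp add: walk_in_succ)
        have "walk_in E V cyc"
          using less.prems(1,2) sps sqi lastq ne unfolding cyc_def walk_in_succ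
          by (auto simp: successively_append_iff succ_edge_sym qs q_def hd_rev)
        moreover have "distinct cyc"
        proof -
          have dq: "distinct qi" "p \<notin> set qi" "q \<notin> set qi" using less.prems(4) qs by auto
          have "set ps \<inter> set qi = {}" using disj dq qs by fastforce
          then show ?thesis using dq less.prems(3) unfolding cyc_def by auto
        qed
        moreover have "length cyc \<ge> 3"
        proof (cases "qi = []")
          case True
          have "length ps \<noteq> 2"
          proof
            assume "length ps = 2"
            then obtain a b where "ps = [a,b]"
              by (metis (no_types, opaque_lifting) One_nat_def Suc_1 Suc_length_conv length_0_conv)
            then show False using neq qs True p_def q_def by auto
          qed
          moreover have "length ps \<ge> 2" using pq ne unfolding p_def q_def
            by (cases ps) (auto split: if_splits simp: Suc_le_eq)
          ultimately show ?thesis unfolding cyc_def by simp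
        next
          case False
          moreover have "length ps \<ge> 2" using pq ne unfolding p_def q_def
            by (cases ps) (auto split: if_splits simp: Suc_le_eq)
          ultimately show ?thesis unfolding cyc_def by (cases qi) auto
        qed
        moreover have "{last cyc, hd cyc} \<in> E"
        proof (cases "qi = []")
          case True
          then show ?thesis using pqE ne unfolding cyc_def p_def q_def by (simp add: insert_commute)
        next
          case False
          then show ?thesis using hdq ne unfolding cyc_def p_def by (simp add: insert_commute last_rev)
        qed
        ultimately show False using acyc unfolding acyclic_graph_def by blast
      qed
    qed
  qed
qed

definition tpath :: "'a set \<Rightarrow> 'a set set \<Rightarrow> 'a \<Rightarrow> 'a \<Rightarrow> 'a list" where
  "tpath V E p q = (SOME ps. walk_in E V ps \<and> distinct ps \<and> hd ps = p \<and> last ps = q)"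

lemma walk_mono: "walk_in E S ps \<Longrightarrow> S \<subseteq> T \<Longrightarrow> walk_in E T ps"
  unfolding walk_in_def by blast

lemma tpath:
  assumes "is_tree V E" "p \<in> V" "q \<in> V"
  shows "walk_in E V (tpath V E p q) \<and> distinct (tpath V E p q) \<and>
         hd (tpath V E p q) = p \<and> last (tpath V E p q) = q"
proof -
  obtain ws where "walk_in E V ws" "hd ws = p" "last ws = q"
    using assms unfolding is_tree_def connected_graph_def by blast
  then have "\<exists>ps. walk_in E V ps \<and> distinct ps \<and> hd ps = p \<and> last ps = q"
    using walk_shortcut by metis
  then show ?thesis unfolding tpath_def by (rule someI_ex)
qed

lemma tpath_unique:
  assumes "is_tree V E" "walk_in E V ps" "distinct ps"
  shows "ps = tpath V E (hd ps) (last ps)"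
proof -
  have "hd ps \<in> V" "last ps \<in> V" using assms(2) unfolding walk_in_def by auto
  from tpath[OF assms(1) this] show ?thesis
    using simple_path_unique[of V E ps "tpath V E (hd ps) (last ps)"] assms
    unfolding is_tree_def by auto
qed

lemma on_path_iff:
  assumes "is_tree V E" "p \<in> V" "q \<in> V"
  shows "on_path V E p q x \<longleftrightarrow> x \<in> set (tpath V E p q)"
  using tpath[OF assms] tpath_unique[OF assms(1)] unfolding on_path_def by metis

lemma walk_contains:
  assumes "is_tree V E" "walk_in E S ws" "S \<subseteq> V"
  shows "set (tpath V E (hd ws) (last ws)) \<subseteq> set ws"
proof -
  have w: "walk_in E V ws" using walk_mono assms by blast
  obtain qs where "walk_in E V qs" "distinct qs" "hd qs = hd ws" "last qs = last ws" "set qs \<subseteq> set ws"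
    using walk_shortcut[OF w] by blast
  then show ?thesis using tpath_unique[OF assms(1)] by metis
qed

lemma tpath_rev:
  assumes "is_tree V E" "p \<in> V" "q \<in> V"
  shows "tpath V E q p = rev (tpath V E p q)"
proof -
  have t: "walk_in E V (tpath V E p q)" "distinct (tpath V E p q)"
     "hd (tpath V E p q) = p" "last (tpath V E p q) = q" using tpath[OF assms] by auto
  then have ne: "tpath V E p q \<noteq> []" unfolding walk_in_def by auto
  have "rev (tpath V E p q) = tpath V E (hd (rev (tpath V E p q))) (last (rev (tpath V E p q)))"
    using tpath_unique[OF assms(1) walk_rev[OF t(1)]] t(2) by simp
  then show ?thesis using t ne by (simp add: hd_rev last_rev)
qed

lemma gdist_tree:
  assumes T: "is_tree V E" and C: "C \<subseteq> V" and pq: "p \<in> V" "q \<in> V"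
  shows "gdist E C p q = (if set (tpath V E p q) \<subseteq> C
            then enat (length (tpath V E p q) - 1) else \<infinity>)"
proof -
  let ?W = "{ps. walk_in E C ps \<and> hd ps = p \<and> last ps = q}"
  let ?t = "tpath V E p q"
  have t: "walk_in E V ?t" "distinct ?t" "hd ?t = p" "last ?t = q" using tpath[OF T pq] by auto
  have cont: "set ?t \<subseteq> set ws" if "ws \<in> ?W" for ws
    using walk_contains[OF T _ C, of ws] that by auto
  show ?thesis
  proof (cases "set ?t \<subseteq> C")
    case True
    have tW: "?t \<in> ?W" using t True unfolding walk_in_def by auto
    have "gdist E C p q = enat (length ?t - 1)"
      unfolding gdist_def
    proof (rule antisym)
      show "(INF ps\<in>?W. enat (length ps - 1)) \<le> enat (length ?t - 1)"
        using tW by (rule INF_lower)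
      show "enat (length ?t - 1) \<le> (INF ps\<in>?W. enat (length ps - 1))"
      proof (rule INF_greatest)
        fix ws assume ws: "ws \<in> ?W"
        have "length ?t = card (set ?t)" using t(2) by (simp add: distinct_card)
        also have "\<dots> \<le> card (set ws)" using cont[OF ws] by (simp add: card_mono)
        also have "\<dots> \<le> length ws" by (rule card_length)
        finally show "enat (length ?t - 1) \<le> enat (length ws - 1)" by simp
      qed
    qed
    then show ?thesis using True by simp
  next
    case False
    have W0: "?W = {}"
    proof (rule ccontr)
      assume "?W \<noteq> {}"
      then obtain ws where ws: "ws \<in> ?W" by blast
      then have "set ws \<subseteq> C" unfolding walk_in_def by auto
      then show False using cont[OF ws] False by blast
    qed
    show ?thesis unfolding gdist_def W0 using False by (simp add: top_enat_def)
  qed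
qed

lemma dp_worth_tree:
  assumes T: "is_tree V E" and B: "B \<subseteq> V"
  shows "dp_worth \<delta> E B = (\<Sum>p\<in>B. \<Sum>q\<in>B - {p}.
     (if set (tpath V E p q) \<subseteq> B then \<delta> ^ (length (tpath V E p q) - 1) else 0))"
  unfolding dp_worth_def
proof (intro sum.cong refl)
  fix p q assume "p \<in> B" "q \<in> B - {p}"
  then have "p \<in> V" "q \<in> V" using B by auto
  then show "dpow \<delta> (gdist E B p q) =
     (if set (tpath V E p q) \<subseteq> B then \<delta> ^ (length (tpath V E p q) - 1) else 0)"
    by (simp add: gdist_tree[OF T B] dpow_def)
qed



lemma chain_succ:
  "(\<forall>k. Suc k < length Ss \<longrightarrow> Ss ! k \<inter> Ss ! Suc k \<noteq> {}) \<longleftrightarrow>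
   successively (\<lambda>A B. A \<inter> B \<noteq> {}) Ss"
  by (simp add: successively_conv_nth)

lemma conf_rel_alt:
  "conf_rel H C i j \<longleftrightarrow> i = j \<or>
     (\<exists>Ss. Ss \<noteq> [] \<and> (\<forall>S\<in>set Ss. S \<in> H \<and> S \<subseteq> C) \<and> i \<in> hd Ss \<and> j \<in> last Ss \<and>
           successively (\<lambda>A B. A \<inter> B \<noteq> {}) Ss)"
  unfolding conf_rel_def chain_succ ..

lemma conf_rel_sym: "conf_rel H C i j \<Longrightarrow> conf_rel H C j i"
  unfolding conf_rel_alt
proof (elim disjE exE conjE)
  fix Ss assume a: "Ss \<noteq> []" "\<forall>S\<in>set Ss. S \<in> H \<and> S \<subseteq> C" "i \<in> hd Ss" "j \<in> last Ss"
    "successively (\<lambda>A B. A \<inter> B \<noteq> {}) Ss"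
  have "successively (\<lambda>A B. A \<inter> B \<noteq> {}) (rev Ss)" using a(5) by (simp add: Int_commute)
  then show "j = i \<or> (\<exists>Ss. Ss \<noteq> [] \<and> (\<forall>S\<in>set Ss. S \<in> H \<and> S \<subseteq> C) \<and> j \<in> hd Ss \<and> i \<in> last Ss \<and>
           successively (\<lambda>A B. A \<inter> B \<noteq> {}) Ss)"
    using a by (intro disjI2 exI[of _ "rev Ss"]) (simp add: hd_rev last_rev)
qed auto

lemma conf_rel_trans: "conf_rel H C i j \<Longrightarrow> conf_rel H C j k \<Longrightarrow> conf_rel H C i k"
proof -
  assume 1: "conf_rel H C i j" and 2: "conf_rel H C j k"
  show ?thesis
  proof (cases "i = j \<or> j = k")
    case True then show ?thesis using 1 2 by auto
  next
    case False
    then obtain S1 S2 where a: "S1 \<noteq> []" "\<forall>S\<in>set S1. S \<in> H \<and> S \<subseteq> C" "i \<in> hd S1" "j \<in> last S1"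
      "successively (\<lambda>A B. A \<inter> B \<noteq> {}) S1"
      and b: "S2 \<noteq> []" "\<forall>S\<in>set S2. S \<in> H \<and> S \<subseteq> C" "j \<in> hd S2" "k \<in> last S2"
      "successively (\<lambda>A B. A \<inter> B \<noteq> {}) S2"
      using 1 2 unfolding conf_rel_alt by blast
    have "successively (\<lambda>A B. A \<inter> B \<noteq> {}) (S1 @ S2)"
      using a b by (auto simp: successively_append_iff)
    then show ?thesis unfolding conf_rel_alt using a b
      by (intro disjI2 exI[of _ "S1 @ S2"]) auto
  qed
qed

lemma conf_rel_edge: "S \<in> H \<Longrightarrow> S \<subseteq> C \<Longrightarrow> i \<in> S \<Longrightarrow> j \<in> S \<Longrightarrow> conf_rel H C i j"
  unfolding conf_rel_def by (intro disjI2 exI[of _ "[S]"]) auto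

lemma walk_conf: "walk_in E C ws \<Longrightarrow> x \<in> set ws \<Longrightarrow> conf_rel E C (hd ws) x"
proof (induction ws)
  case Nil then show ?case by simp
next
  case (Cons a rest)
  show ?case
  proof (cases "rest = []")
    case True then show ?thesis using Cons.prems by (simp add: conf_rel_def)
  next
    case False
    have w: "walk_in E C rest" "{a, hd rest} \<in> E" "{a, hd rest} \<subseteq> C"
      using Cons.prems(1) False unfolding walk_in_succ by (cases rest; auto)+
    have e: "conf_rel E C a (hd rest)" using conf_rel_edge[OF w(2) w(3)] by auto
    show ?thesis
    proof (cases "x = a")
      case True then show ?thesis by (simp add: conf_rel_def)
    next
      case xa: False
      then have "x \<in> set rest" using Cons.prems by auto
      then show ?thesis using conf_rel_trans[OF e Cons.IH[OF w(1)]] by simp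
    qed
  qed
qed

definition wt :: "real \<Rightarrow> 'a set \<Rightarrow> 'a set set \<Rightarrow> 'a \<Rightarrow> 'a \<Rightarrow> real" where
  "wt \<delta> V E p q = \<delta> ^ (length (tpath V E p q) - 1)"

lemma rw_tree:
  assumes T: "is_tree V E" and C: "C \<subseteq> V"
  shows "restricted_worth (dp_worth \<delta> E) E C = (\<Sum>p\<in>C. \<Sum>q\<in>C - {p}.
     (if set (tpath V E p q) \<subseteq> C then wt \<delta> V E p q else 0))"
proof -
  define cls where "cls i = {j\<in>C. conf_rel E C i j}" for i
  define f where "f p = (\<Sum>q\<in>C - {p}. (if set (tpath V E p q) \<subseteq> C then wt \<delta> V E p q else 0))" for p
  have finV: "finite V" using T unfolding is_tree_def simple_graph_def by auto
  then have finC: "finite C" using C finite_subset by blast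
  have clsC: "cls p \<subseteq> C" for p unfolding cls_def by auto
  have pin: "p \<in> cls p" if "p \<in> C" for p using that unfolding cls_def conf_rel_def by auto
  have clseq: "cls p' = cls p" if "p' \<in> cls p" for p p'
  proof -
    have a: "conf_rel E C p p'" using that unfolding cls_def by simp
    have b: "conf_rel E C p' p" using conf_rel_sym[OF a] .
    show ?thesis unfolding cls_def
      by (auto intro: conf_rel_trans[OF a] conf_rel_trans[OF b])
  qed
  have key: "p \<in> C \<Longrightarrow> q \<in> C \<Longrightarrow> set (tpath V E p q) \<subseteq> C \<Longrightarrow> set (tpath V E p q) \<subseteq> cls p" for p q
  proof -
    assume pq: "p \<in> C" "q \<in> C" "set (tpath V E p q) \<subseteq> C"
    then have t: "walk_in E V (tpath V E p q)" "hd (tpath V E p q) = p"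
      using tpath[OF T, of p q] C by auto
    have w: "walk_in E C (tpath V E p q)" using t pq(3) unfolding walk_in_def by auto
    show ?thesis
    proof
      fix x assume x: "x \<in> set (tpath V E p q)"
      have "conf_rel E C p x" using walk_conf[OF w x] t(2) by simp
      then show "x \<in> cls p" using x pq(3) unfolding cls_def by auto
    qed
  qed
  have tq: "q \<in> set (tpath V E p q)" if "p \<in> C" "q \<in> C" for p q
  proof -
    have "p \<in> V" "q \<in> V" using that C by auto
    from tpath[OF T this] show ?thesis by (metis last_in_set walk_in_def)
  qed
  have fcls: "(\<Sum>q\<in>cls p - {p}. (if set (tpath V E p q) \<subseteq> cls p then wt \<delta> V E p q else 0)) = f p"
    if p: "p \<in> C" for p
    unfolding f_def
  proof (rule sum.mono_neutral_cong_left)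
    show "finite (C - {p})" using finC by simp
    show "cls p - {p} \<subseteq> C - {p}" using clsC by auto
    show "\<forall>q\<in>C - {p} - (cls p - {p}). (if set (tpath V E p q) \<subseteq> C then wt \<delta> V E p q else 0) = 0"
    proof
      fix q assume q: "q \<in> C - {p} - (cls p - {p})"
      then have "q \<in> C" "q \<notin> cls p" by auto
      then have "\<not> set (tpath V E p q) \<subseteq> C" using key[OF p] tq[OF p] by blast
      then show "(if set (tpath V E p q) \<subseteq> C then wt \<delta> V E p q else 0) = 0" by simp
    qed
    show "(if set (tpath V E p q) \<subseteq> cls p then wt \<delta> V E p q else 0) =
          (if set (tpath V E p q) \<subseteq> C then wt \<delta> V E p q else 0)" if "q \<in> cls p - {p}" for q
    proof -
      have q: "q \<in> C" using that clsC by auto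
      have "set (tpath V E p q) \<subseteq> cls p \<longleftrightarrow> set (tpath V E p q) \<subseteq> C"
        using key[OF p q] clsC[of p] by blast
      then show ?thesis by simp
    qed
  qed
  have dpB: "dp_worth \<delta> E (cls p) = sum f (cls p)" if p: "p \<in> C" for p
    unfolding dp_worth_tree[OF T order.trans[OF clsC C]]
  proof (intro sum.cong refl)
    fix p' assume p': "p' \<in> cls p"
    then have "p' \<in> C" using clsC by auto
    from fcls[OF this] show "(\<Sum>q\<in>cls p - {p'}. if set (tpath V E p' q) \<subseteq> cls p
          then \<delta> ^ (length (tpath V E p' q) - 1) else 0) = f p'"
      using clseq[OF p'] unfolding wt_def by simp
  qed
  have "restricted_worth (dp_worth \<delta> E) E C = (\<Sum>B\<in>cls ` C. sum f B)"
  proof -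
    have "conf_partition E C = cls ` C" unfolding conf_partition_def cls_def by simp
    moreover have "(\<Sum>B\<in>cls ` C. dp_worth \<delta> E B) = (\<Sum>B\<in>cls ` C. sum f B)"
    proof (rule sum.cong[OF refl])
      fix B assume "B \<in> cls ` C"
      then obtain p where "p \<in> C" "B = cls p" by blast
      then show "dp_worth \<delta> E B = sum f B" using dpB by simp
    qed
    ultimately show ?thesis unfolding restricted_worth_def by simp
  qed
  also have "\<dots> = sum f (\<Union>(cls ` C))"
  proof (rule sum.Union_disjoint[symmetric, simplified])
    show "\<forall>A\<in>cls ` C. finite A" using finC clsC finite_subset by blast
    show "\<forall>A\<in>cls ` C. \<forall>B\<in>cls ` C. A \<noteq> B \<longrightarrow> A \<inter> B = {}"
    proof (intro ballI impI)
      fix A B assume A: "A \<in> cls ` C" and B: "B \<in> cls ` C" and ne: "A \<noteq> B"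
      obtain a b where "A = cls a" "B = cls b" using A B by blast
      show "A \<inter> B = {}"
      proof (rule ccontr)
        assume "A \<inter> B \<noteq> {}"
        then obtain x where "x \<in> cls a" "x \<in> cls b" using \<open>A = cls a\<close> \<open>B = cls b\<close> by blast
        then have "cls a = cls b" using clseq by metis
        then show False using ne \<open>A = cls a\<close> \<open>B = cls b\<close> by simp
      qed
    qed
  qed
  also have "\<Union>(cls ` C) = C" using clsC pin by blast
  finally show ?thesis unfolding f_def .
qed



lemma shapley_cong:
  assumes "i \<in> N" "\<And>S. S \<subseteq> N \<Longrightarrow> u S = u' S"
  shows "shapley i N u = shapley i N u'"
  unfolding shapley_def
proof (intro sum.cong refl)
  fix S assume "S \<in> Pow (N - {i})"
  then have "S \<subseteq> N" "S \<union> {i} \<subseteq> N" using assms(1) by auto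
  then show "fact (card S) * fact (card N - card S - 1) / fact (card N) * (u (S \<union> {i}) - u S) =
        fact (card S) * fact (card N - card S - 1) / fact (card N) * (u' (S \<union> {i}) - u' S)"
    using assms(2) by simp
qed

lemma shapley_lin:
  "shapley i N (\<lambda>S. \<Sum>x\<in>X. c x * g x S) = (\<Sum>x\<in>X. c x * shapley i N (g x))"
  unfolding shapley_def
  by (simp add: sum_distrib_left sum_subtractf[symmetric] right_diff_distrib algebra_simps
       sum.swap[of _ X])

lemma hockey:
  assumes "finite A"
  shows "(\<Sum>R\<in>Pow A. fact (k + card R) * fact (card A - card R) :: real)
           = fact (k + 1 + card A) / (k + 1)"
  using assms
proof (induction A rule: finite_induct)
  case empty
  then show ?case by (simp add: fact_Suc field_simps)
next
  case (insert a A)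
  let ?m = "card A"
  let ?g = "\<lambda>R. fact (k + card R) * fact (card (insert a A) - card R) :: real"
  have cI: "card (insert a A) = Suc ?m" using insert by simp
  have disj: "Pow A \<inter> insert a ` Pow A = {}" using insert by auto
  have inj: "inj_on (insert a) (Pow A)" unfolding inj_on_def
  proof (intro ballI impI)
    fix x y assume "x \<in> Pow A" "y \<in> Pow A" "insert a x = insert a y"
    moreover have "a \<notin> x" "a \<notin> y" using insert \<open>x \<in> Pow A\<close> \<open>y \<in> Pow A\<close> by auto
    ultimately show "x = y" using insert_ident by metis
  qed
  have "sum ?g (Pow (insert a A)) = sum ?g (Pow A) + sum ?g (insert a ` Pow A)"
    unfolding Pow_insert using insert disj by (intro sum.union_disjoint) auto
  also have "sum ?g (insert a ` Pow A) = (\<Sum>R\<in>Pow A. ?g (insert a R))"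
    using inj by (rule sum.reindex[unfolded comp_def])
  also have "sum ?g (Pow A) + (\<Sum>R\<in>Pow A. ?g (insert a R)) =
       (\<Sum>R\<in>Pow A. (real (k + ?m + 2)) * (fact (k + card R) * fact (?m - card R)))"
    unfolding sum.distrib[symmetric]
  proof (intro sum.cong refl)
    fix R assume R: "R \<in> Pow A"
    then have fR: "finite R" "a \<notin> R" "card R \<le> ?m" using insert finite_subset card_mono by auto
    have c1: "card (insert a R) = Suc (card R)" using fR by simp
    have f1: "fact (Suc ?m - card R) = real (Suc ?m - card R) * (fact (?m - card R) :: real)"
      using fR(3) by (simp add: Suc_diff_le fact_Suc)
    have f2: "fact (k + Suc (card R)) = real (k + Suc (card R)) * (fact (k + card R) :: real)"
      by (simp add: fact_Suc)
    have f3: "Suc ?m - Suc (card R) = ?m - card R" by simp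
    have e2: "real (Suc ?m - card R) = real ?m + 1 - real (card R)" using fR(3) by (simp add: of_nat_diff)
    have e: "real (Suc ?m - card R) + real (k + Suc (card R)) = real (k + ?m + 2)"
      using fR(3) by (simp add: of_nat_diff)
    show "?g R + ?g (insert a R) = real (k + ?m + 2) * (fact (k + card R) * fact (?m - card R))"
      unfolding cI c1 f1 f2 f3 e2 by (simp add: algebra_simps)
  qed
  also have "\<dots> = real (k + ?m + 2) * (fact (k + 1 + ?m) / (k + 1))"
    by (simp add: sum_distrib_left[symmetric] insert.IH)
  also have "\<dots> = fact (k + 1 + card (insert a A)) / (k + 1)"
    unfolding cI by (simp add: fact_Suc algebra_simps)
  finally show ?case by simp
qed

lemma shapley_unanimity:
  assumes N: "finite N" "i \<in> N" and T: "T \<subseteq> N" "T \<noteq> {}"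
  shows "shapley i N (\<lambda>S. if T \<subseteq> S then 1 else 0) = (if i \<in> T then 1 / real (card T) else 0)"
proof (cases "i \<in> T")
  case False
  have "T \<subseteq> S \<union> {i} \<longleftrightarrow> T \<subseteq> S" for S using False by blast
  then show ?thesis unfolding shapley_def using False by simp
next
  case iT: True
  let ?c = "\<lambda>S. fact (card S) * fact (card N - card S - 1) / fact (card N) :: real"
  define A where "A = N - T"
  define T0 where "T0 = T - {i}"
  have finA: "finite A" using N unfolding A_def by simp
  have finT: "finite T" using T N finite_subset by blast
  have cT: "card T = Suc (card T0)" using iT finT unfolding T0_def by (simp add: card_Diff_singleton) (metis Suc_pred card_gt_0_iff empty_iff)
  have cN: "card N = card T + card A" unfolding A_def using T N
    by (metis card_Diff_subset finite_subset card_mono le_add_diff_inverse)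
  have "shapley i N (\<lambda>S. if T \<subseteq> S then 1 else 0) =
        (\<Sum>S\<in>Pow (N - {i}). if T0 \<subseteq> S then ?c S else 0)"
    unfolding shapley_def
  proof (intro sum.cong refl)
    fix S assume "S \<in> Pow (N - {i})"
    then have "i \<notin> S" by auto
    then have "\<not> T \<subseteq> S" "T \<subseteq> S \<union> {i} \<longleftrightarrow> T0 \<subseteq> S" using iT unfolding T0_def by auto
    then show "?c S * ((if T \<subseteq> S \<union> {i} then 1 else 0) - (if T \<subseteq> S then 1 else 0)) =
               (if T0 \<subseteq> S then ?c S else 0)" by simp
  qed
  also have "\<dots> = (\<Sum>S\<in>{S\<in>Pow (N - {i}). T0 \<subseteq> S}. ?c S)"
    by (simp add: sum.inter_filter[symmetric] N)
  also have "\<dots> = (\<Sum>R\<in>Pow A. ?c (T0 \<union> R))"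
  proof (rule sum.reindex_cong)
    show "inj_on ((\<union>) T0) (Pow A)" unfolding inj_on_def A_def T0_def by blast
    show "{S \<in> Pow (N - {i}). T0 \<subseteq> S} = (\<union>) T0 ` Pow A"
    proof
      show "{S \<in> Pow (N - {i}). T0 \<subseteq> S} \<subseteq> (\<union>) T0 ` Pow A"
      proof
        fix S assume S: "S \<in> {S \<in> Pow (N - {i}). T0 \<subseteq> S}"
        then have "S = T0 \<union> (S - T)" "S - T \<in> Pow A" unfolding T0_def A_def by auto
        then show "S \<in> (\<union>) T0 ` Pow A" by blast
      qed
      show "(\<union>) T0 ` Pow A \<subseteq> {S \<in> Pow (N - {i}). T0 \<subseteq> S}"
        using T iT unfolding T0_def A_def by auto
    qed
  qed simp
  also have "\<dots> = (\<Sum>R\<in>Pow A. fact (card T0 + card R) * fact (card A - card R)) / fact (card N)"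
    unfolding sum_divide_distrib
  proof (intro sum.cong refl)
    fix R assume R: "R \<in> Pow A"
    then have fR: "finite R" "card R \<le> card A" using finA finite_subset card_mono by auto
    have "T0 \<inter> R = {}" using R unfolding A_def T0_def by auto
    moreover have "finite T0" using finT unfolding T0_def by simp
    ultimately have c: "card (T0 \<union> R) = card T0 + card R" using fR by (simp add: card_Un_disjoint)
    have "card N - card (T0 \<union> R) - 1 = card A - card R" unfolding c cN cT by simp
    then show "?c (T0 \<union> R) = fact (card T0 + card R) * fact (card A - card R) / fact (card N)"
      by (simp add: c)
  qed
  also have "\<dots> = fact (card T0 + 1 + card A) / (card T0 + 1) / fact (card N)"
    by (simp add: hockey[OF finA])
  also have "\<dots> = 1 / real (card T)"
    unfolding cN cT by simp
  finally show ?thesis using iT by simp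
qed



lemma ends_pair:
  assumes "p \<noteq> q"
  shows "(fst_end {p,q} = p \<and> snd_end {p,q} = q) \<or> (fst_end {p,q} = q \<and> snd_end {p,q} = p)"
proof -
  have f: "fst_end {p,q} \<in> {p,q}" unfolding fst_end_def by (rule someI[of _ p]) simp
  have "\<exists>x. x \<in> {p,q} \<and> x \<noteq> fst_end {p,q}" using assms by (cases "fst_end {p,q} = p") auto
  then have s: "snd_end {p,q} \<in> {p,q} \<and> snd_end {p,q} \<noteq> fst_end {p,q}"
    unfolding snd_end_def by (rule someI_ex)
  show ?thesis using f s by auto
qed

lemma on_path_sym: "on_path V E p q x \<Longrightarrow> on_path V E q p x"
  unfolding on_path_def
  by (metis walk_rev distinct_rev hd_rev last_rev set_rev)

lemma restricted_as_sum:
  assumes T: "is_tree V E" and C: "C \<subseteq> V"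
  shows "restricted_worth (dp_worth \<delta> E) E C =
    (\<Sum>x\<in>{(p,q). p \<in> V \<and> q \<in> V \<and> p \<noteq> q}.
       wt \<delta> V E (fst x) (snd x) * (if set (tpath V E (fst x) (snd x)) \<subseteq> C then 1 else 0))"
proof -
  have finV: "finite V" using T unfolding is_tree_def simple_graph_def by auto
  then have finC: "finite C" using C finite_subset by blast
  let ?g = "\<lambda>p q. (if set (tpath V E p q) \<subseteq> C then wt \<delta> V E p q else 0)"
  have "restricted_worth (dp_worth \<delta> E) E C = (\<Sum>p\<in>C. \<Sum>q\<in>C - {p}. ?g p q)"
    by (rule rw_tree[OF T C])
  also have "\<dots> = (\<Sum>(p,q)\<in>Sigma C (\<lambda>p. C - {p}). ?g p q)"
    using finC by (intro sum.Sigma) auto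
  also have "\<dots> = (\<Sum>(p,q)\<in>{(p,q). p \<in> V \<and> q \<in> V \<and> p \<noteq> q}. ?g p q)"
  proof (rule sum.mono_neutral_left)
    have "{(p,q). p \<in> V \<and> q \<in> V \<and> p \<noteq> q} \<subseteq> V \<times> V" by auto
    then show "finite {(p,q). p \<in> V \<and> q \<in> V \<and> p \<noteq> q}" using finV finite_subset by blast
    show "Sigma C (\<lambda>p. C - {p}) \<subseteq> {(p,q). p \<in> V \<and> q \<in> V \<and> p \<noteq> q}" using C by auto
    show "\<forall>x\<in>{(p,q). p \<in> V \<and> q \<in> V \<and> p \<noteq> q} - Sigma C (\<lambda>p. C - {p}). (case x of (p,q) \<Rightarrow> ?g p q) = 0"
    proof
      fix x assume x: "x \<in> {(p,q). p \<in> V \<and> q \<in> V \<and> p \<noteq> q} - Sigma C (\<lambda>p. C - {p})"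
      obtain p q where xpq: "x = (p,q)" by (cases x)
      have pq: "p \<in> V" "q \<in> V" "p \<noteq> q" using x xpq by auto
      have t: "walk_in E V (tpath V E p q)" "hd (tpath V E p q) = p" "last (tpath V E p q) = q"
        using tpath[OF T pq(1,2)] by auto
      have "p \<in> set (tpath V E p q)" "q \<in> set (tpath V E p q)"
        using t by (metis hd_in_set last_in_set walk_in_def)+
      then have "\<not> set (tpath V E p q) \<subseteq> C" using x xpq pq by auto
      then show "(case x of (p,q) \<Rightarrow> ?g p q) = 0" using xpq by simp
    qed
  qed
  also have "\<dots> = (\<Sum>x\<in>{(p,q). p \<in> V \<and> q \<in> V \<and> p \<noteq> q}.
       wt \<delta> V E (fst x) (snd x) * (if set (tpath V E (fst x) (snd x)) \<subseteq> C then 1 else 0))"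
    by (intro sum.cong refl) (simp split: prod.splits)
  finally show ?thesis .
qed

theorem mainTheorem3:
  fixes V :: "'a set" and E :: "'a set set" and \<delta> :: real and i :: 'a
  assumes "is_tree V E"
    and "0 < \<delta>" and "\<delta> < 1"
    and "i \<in> V"
  shows "shapley i V (restricted_worth (dp_worth \<delta> E) E) =
    (\<Sum>e\<in>{{p, q} | p q. p \<in> V \<and> q \<in> V \<and> p \<noteq> q \<and> on_path V E p q i}.
        2 * \<delta> ^ the_enat (gdist E V (fst_end e) (snd_end e))
          / (real (the_enat (gdist E V (fst_end e) (snd_end e))) + 1))"
proof -
  note T = assms(1)
  have finV: "finite V" using T unfolding is_tree_def simple_graph_def by auto
  define Off where "Off = {(p,q). p \<in> V \<and> q \<in> V \<and> p \<noteq> q}"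
  have finOff: "finite Off"
  proof -
    have "Off \<subseteq> V \<times> V" unfolding Off_def by auto
    then show ?thesis using finV finite_subset by blast
  qed
  define L where "L p q = length (tpath V E p q)" for p q
  define h where "h p q = \<delta> ^ (L p q - 1) / real (L p q)" for p q
  have tp: "walk_in E V (tpath V E p q) \<and> distinct (tpath V E p q) \<and>
         hd (tpath V E p q) = p \<and> last (tpath V E p q) = q" if "p \<in> V" "q \<in> V" for p q
    using tpath[OF T that] .
  have Lpos: "L p q \<ge> 1" if "p \<in> V" "q \<in> V" for p q
    using tp[OF that] unfolding L_def walk_in_def by (cases "tpath V E p q") auto
  have hsym: "h q p = h p q" if "p \<in> V" "q \<in> V" for p q
    unfolding h_def L_def using tpath_rev[OF T that] by simp
  have sub: "set (tpath V E p q) \<subseteq> V" "set (tpath V E p q) \<noteq> {}" if "p \<in> V" "q \<in> V" for p q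
    using tp[OF that] unfolding walk_in_def by auto
  have "shapley i V (restricted_worth (dp_worth \<delta> E) E) =
     shapley i V (\<lambda>C. \<Sum>x\<in>Off. wt \<delta> V E (fst x) (snd x) *
        (\<lambda>x C. if set (tpath V E (fst x) (snd x)) \<subseteq> C then 1 else 0) x C)"
    using restricted_as_sum[OF T] assms(4) unfolding Off_def
    by (intro shapley_cong) auto
  also have "\<dots> = (\<Sum>x\<in>Off. wt \<delta> V E (fst x) (snd x) *
      shapley i V (\<lambda>C. if set (tpath V E (fst x) (snd x)) \<subseteq> C then 1 else 0))"
    by (rule shapley_lin)
  also have "\<dots> = (\<Sum>x\<in>Off. if on_path V E (fst x) (snd x) i then h (fst x) (snd x) else 0)"
  proof (intro sum.cong refl)
    fix x assume "x \<in> Off"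
    then obtain p q where x: "x = (p,q)" "p \<in> V" "q \<in> V" unfolding Off_def by auto
    have c: "card (set (tpath V E p q)) = L p q"
      using tp[OF x(2,3)] unfolding L_def by (simp add: distinct_card)
    show "wt \<delta> V E (fst x) (snd x) *
      shapley i V (\<lambda>C. if set (tpath V E (fst x) (snd x)) \<subseteq> C then 1 else 0) =
      (if on_path V E (fst x) (snd x) i then h (fst x) (snd x) else 0)"
      using shapley_unanimity[OF finV assms(4) sub[OF x(2,3)]] on_path_iff[OF T x(2,3)] c
      unfolding x h_def wt_def L_def by simp
  qed
  also have "\<dots> = sum (\<lambda>x. h (fst x) (snd x)) {x\<in>Off. on_path V E (fst x) (snd x) i}"
    using finOff by (simp add: sum.inter_filter)
  also have "\<dots> = (\<Sum>e\<in>(\<lambda>x. {fst x, snd x}) ` {x\<in>Off. on_path V E (fst x) (snd x) i}.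
        sum (\<lambda>x. h (fst x) (snd x)) {y\<in>{x\<in>Off. on_path V E (fst x) (snd x) i}. {fst y, snd y} = e})"
    using finOff by (intro sum.image_gen) auto
  also have "(\<lambda>x. {fst x, snd x}) ` {x\<in>Off. on_path V E (fst x) (snd x) i} =
     {{p, q} | p q. p \<in> V \<and> q \<in> V \<and> p \<noteq> q \<and> on_path V E p q i}"
    unfolding Off_def
  proof (intro equalityI subsetI)
    fix e assume "e \<in> (\<lambda>x. {fst x, snd x}) ` {x \<in> {(p, q). p \<in> V \<and> q \<in> V \<and> p \<noteq> q}. on_path V E (fst x) (snd x) i}"
    then obtain p q where "e = {p,q}" "p \<in> V" "q \<in> V" "p \<noteq> q" "on_path V E p q i" by auto
    then show "e \<in> {{p, q} | p q. p \<in> V \<and> q \<in> V \<and> p \<noteq> q \<and> on_path V E p q i}" by blast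
  next
    fix e assume "e \<in> {{p, q} | p q. p \<in> V \<and> q \<in> V \<and> p \<noteq> q \<and> on_path V E p q i}"
    then obtain p q where "e = {p,q}" "p \<in> V" "q \<in> V" "p \<noteq> q" "on_path V E p q i" by blast
    then show "e \<in> (\<lambda>x. {fst x, snd x}) ` {x \<in> {(p, q). p \<in> V \<and> q \<in> V \<and> p \<noteq> q}. on_path V E (fst x) (snd x) i}"
      by (intro image_eqI[of _ _ "(p,q)"]) auto
  qed
  also have "(\<Sum>e\<in>{{p, q} | p q. p \<in> V \<and> q \<in> V \<and> p \<noteq> q \<and> on_path V E p q i}.
        sum (\<lambda>x. h (fst x) (snd x)) {y\<in>{x\<in>Off. on_path V E (fst x) (snd x) i}. {fst y, snd y} = e})
     = (\<Sum>e\<in>{{p, q} | p q. p \<in> V \<and> q \<in> V \<and> p \<noteq> q \<and> on_path V E p q i}.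
        2 * \<delta> ^ the_enat (gdist E V (fst_end e) (snd_end e))
          / (real (the_enat (gdist E V (fst_end e) (snd_end e))) + 1))"
  proof (intro sum.cong refl)
    fix e assume "e \<in> {{p, q} | p q. p \<in> V \<and> q \<in> V \<and> p \<noteq> q \<and> on_path V E p q i}"
    then obtain p q where e: "e = {p,q}" "p \<in> V" "q \<in> V" "p \<noteq> q" "on_path V E p q i" by blast
    have fib: "{y\<in>{x\<in>Off. on_path V E (fst x) (snd x) i}. {fst y, snd y} = e} = {(p,q),(q,p)}"
      using e on_path_sym[of V E p q i] unfolding Off_def by (auto simp: doubleton_eq_iff)
    have s1: "sum (\<lambda>x. h (fst x) (snd x)) {(p,q),(q,p)} = 2 * h p q"
      using e hsym[OF e(2,3)] by simp
    have gd: "gdist E V a b = enat (L a b - 1)" if "a \<in> V" "b \<in> V" for a b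
      using gdist_tree[OF T order.refl that] sub[OF that] unfolding L_def by simp
    have hh: "2 * \<delta> ^ the_enat (gdist E V a b) / (real (the_enat (gdist E V a b)) + 1) = 2 * h a b"
      if "a \<in> V" "b \<in> V" for a b
    proof -
      have "real (L a b - 1) + 1 = real (L a b)" using Lpos[OF that] by (simp add: of_nat_diff)
      then show ?thesis unfolding gd[OF that] h_def by simp
    qed
    have "2 * \<delta> ^ the_enat (gdist E V (fst_end e) (snd_end e))
          / (real (the_enat (gdist E V (fst_end e) (snd_end e))) + 1) = 2 * h p q"
      using ends_pair[OF e(4)] e(1) hh[OF e(2,3)] hh[OF e(3,2)] hsym[OF e(2,3)] by auto
    then show "sum (\<lambda>x. h (fst x) (snd x)) {y\<in>{x\<in>Off. on_path V E (fst x) (snd x) i}. {fst y, snd y} = e}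
      = 2 * \<delta> ^ the_enat (gdist E V (fst_end e) (snd_end e))
          / (real (the_enat (gdist E V (fst_end e) (snd_end e))) + 1)"
      unfolding fib s1 by simp
  qed
  finally show ?thesis .
qed


end
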